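(* Let $(\mathcal C,\otimes,\sigma,I,(\,)^* )$ be a compact closed category. An object $R$ of $\mathcal C$ is (extensionally) reflexive if and only if $R$ is both self-dual and self-similar.
   Context: In a compact closed category the internal hom is $[A\to B]=A^*\otimes B$. An object $R$ is (extensionally) reflexive if $R\cong[R\to R]$, i.e. there are mutually inverse isomorphisms $\mathrm{app}:R\to[R\to R]$ and $\mathrm{lam}:[R\to R]\to R$. An object $N$ is self-similar if $N\cong N\otimes N$ (the isomorphisms $N\otimes N\to N$ and $N\to N\otimes N$ are called code and decode arrows). An object $S$ is self-dual if $S\cong S^*$. *)

theory Defs
  imports Main
begin

text \<open>Arrows carry their domain and codomain; composition is written
  cmp C g f for "g after f".  Structural isomorphisms are given together with
  their inverses (which are unique, so this is no loss of generality).\<close>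

record ('o, 'a) cc_data =
  Ob :: "'o set"
  Ar :: "'a set"
  cdom :: "'a \<Rightarrow> 'o"
  ccod :: "'a \<Rightarrow> 'o"
  cmp :: "'a \<Rightarrow> 'a \<Rightarrow> 'a"
  ident :: "'o \<Rightarrow> 'a"
  tens_ob :: "'o \<Rightarrow> 'o \<Rightarrow> 'o"
  tens_ar :: "'a \<Rightarrow> 'a \<Rightarrow> 'a"
  unit_ob :: "'o"
  assoc :: "'o \<Rightarrow> 'o \<Rightarrow> 'o \<Rightarrow> 'a"
  assoc_inv :: "'o \<Rightarrow> 'o \<Rightarrow> 'o \<Rightarrow> 'a"
  lunit :: "'o \<Rightarrow> 'a"
  lunit_inv :: "'o \<Rightarrow> 'a"
  runit :: "'o \<Rightarrow> 'a"
  runit_inv :: "'o \<Rightarrow> 'a"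
  symm :: "'o \<Rightarrow> 'o \<Rightarrow> 'a"
  dual :: "'o \<Rightarrow> 'o"
  eta :: "'o \<Rightarrow> 'a"
  eps :: "'o \<Rightarrow> 'a"

definition hom :: "('o, 'a, 'x) cc_data_scheme \<Rightarrow> 'o \<Rightarrow> 'o \<Rightarrow> 'a set" where
  "hom C A B = {f \<in> Ar C. cdom C f = A \<and> ccod C f = B}"

definition seq :: "('o, 'a, 'x) cc_data_scheme \<Rightarrow> 'a \<Rightarrow> 'a \<Rightarrow> bool" where
  "seq C g f \<longleftrightarrow> f \<in> Ar C \<and> g \<in> Ar C \<and> ccod C f = cdom C g"

definition inverse_pair :: "('o, 'a, 'x) cc_data_scheme \<Rightarrow> 'a \<Rightarrow> 'a \<Rightarrow> bool" where
  "inverse_pair C f g \<longleftrightarrow> f \<in> Ar C \<and> g \<in> Ar C \<and> ccod C f = cdom C g \<and> ccod C g = cdom C f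
     \<and> cmp C g f = ident C (cdom C f) \<and> cmp C f g = ident C (ccod C f)"

definition category :: "('o, 'a, 'x) cc_data_scheme \<Rightarrow> bool" where
  "category C \<longleftrightarrow>
     (\<forall>f \<in> Ar C. cdom C f \<in> Ob C \<and> ccod C f \<in> Ob C) \<and>
     (\<forall>A \<in> Ob C. ident C A \<in> hom C A A) \<and>
     (\<forall>f g. seq C g f \<longrightarrow> cmp C g f \<in> hom C (cdom C f) (ccod C g)) \<and>
     (\<forall>f \<in> Ar C. cmp C f (ident C (cdom C f)) = f \<and> cmp C (ident C (ccod C f)) f = f) \<and>
     (\<forall>f g h. seq C g f \<and> seq C h g \<longrightarrow> cmp C h (cmp C g f) = cmp C (cmp C h g) f)"

definition monoidal_category :: "('o, 'a, 'x) cc_data_scheme \<Rightarrow> bool" where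
  "monoidal_category C \<longleftrightarrow> category C \<and>
     unit_ob C \<in> Ob C \<and>
     (\<forall>A \<in> Ob C. \<forall>B \<in> Ob C. tens_ob C A B \<in> Ob C) \<and>
     \<comment> \<open>tensor is a bifunctor\<close>
     (\<forall>f \<in> Ar C. \<forall>g \<in> Ar C. tens_ar C f g \<in>
        hom C (tens_ob C (cdom C f) (cdom C g)) (tens_ob C (ccod C f) (ccod C g))) \<and>
     (\<forall>A \<in> Ob C. \<forall>B \<in> Ob C. tens_ar C (ident C A) (ident C B) = ident C (tens_ob C A B)) \<and>
     (\<forall>f f' g g'. seq C f' f \<and> seq C g' g \<longrightarrow>
        tens_ar C (cmp C f' f) (cmp C g' g) = cmp C (tens_ar C f' g') (tens_ar C f g)) \<and>
     \<comment> \<open>associator: natural isomorphism\<close>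
     (\<forall>A \<in> Ob C. \<forall>B \<in> Ob C. \<forall>D \<in> Ob C.
        assoc C A B D \<in> hom C (tens_ob C (tens_ob C A B) D) (tens_ob C A (tens_ob C B D)) \<and>
        inverse_pair C (assoc C A B D) (assoc_inv C A B D)) \<and>
     (\<forall>f \<in> Ar C. \<forall>g \<in> Ar C. \<forall>h \<in> Ar C.
        cmp C (assoc C (ccod C f) (ccod C g) (ccod C h)) (tens_ar C (tens_ar C f g) h) =
        cmp C (tens_ar C f (tens_ar C g h)) (assoc C (cdom C f) (cdom C g) (cdom C h))) \<and>
     \<comment> \<open>left and right unitors: natural isomorphisms\<close>
     (\<forall>A \<in> Ob C. lunit C A \<in> hom C (tens_ob C (unit_ob C) A) A \<and>
        inverse_pair C (lunit C A) (lunit_inv C A)) \<and>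
     (\<forall>A \<in> Ob C. runit C A \<in> hom C (tens_ob C A (unit_ob C)) A \<and>
        inverse_pair C (runit C A) (runit_inv C A)) \<and>
     (\<forall>f \<in> Ar C. cmp C (lunit C (ccod C f)) (tens_ar C (ident C (unit_ob C)) f) =
        cmp C f (lunit C (cdom C f))) \<and>
     (\<forall>f \<in> Ar C. cmp C (runit C (ccod C f)) (tens_ar C f (ident C (unit_ob C))) =
        cmp C f (runit C (cdom C f))) \<and>
     \<comment> \<open>pentagon\<close>
     (\<forall>A \<in> Ob C. \<forall>B \<in> Ob C. \<forall>D \<in> Ob C. \<forall>E \<in> Ob C.
        cmp C (tens_ar C (ident C A) (assoc C B D E))
          (cmp C (assoc C A (tens_ob C B D) E) (tens_ar C (assoc C A B D) (ident C E))) =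
        cmp C (assoc C A B (tens_ob C D E)) (assoc C (tens_ob C A B) D E)) \<and>
     \<comment> \<open>triangle\<close>
     (\<forall>A \<in> Ob C. \<forall>B \<in> Ob C.
        cmp C (tens_ar C (ident C A) (lunit C B)) (assoc C A (unit_ob C) B) =
        tens_ar C (runit C A) (ident C B))"

definition symmetric_monoidal_category :: "('o, 'a, 'x) cc_data_scheme \<Rightarrow> bool" where
  "symmetric_monoidal_category C \<longleftrightarrow> monoidal_category C \<and>
     (\<forall>A \<in> Ob C. \<forall>B \<in> Ob C. symm C A B \<in> hom C (tens_ob C A B) (tens_ob C B A)) \<and>
     (\<forall>f \<in> Ar C. \<forall>g \<in> Ar C.
        cmp C (symm C (ccod C f) (ccod C g)) (tens_ar C f g) =
        cmp C (tens_ar C g f) (symm C (cdom C f) (cdom C g))) \<and>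
     (\<forall>A \<in> Ob C. \<forall>B \<in> Ob C. cmp C (symm C B A) (symm C A B) = ident C (tens_ob C A B)) \<and>
     \<comment> \<open>hexagon\<close>
     (\<forall>A \<in> Ob C. \<forall>B \<in> Ob C. \<forall>D \<in> Ob C.
        cmp C (assoc C B D A) (cmp C (symm C A (tens_ob C B D)) (assoc C A B D)) =
        cmp C (tens_ar C (ident C B) (symm C A D))
          (cmp C (assoc C B A D) (tens_ar C (symm C A B) (ident C D))))"

definition compact_closed :: "('o, 'a, 'x) cc_data_scheme \<Rightarrow> bool" where
  "compact_closed C \<longleftrightarrow> symmetric_monoidal_category C \<and>
     (\<forall>A \<in> Ob C. dual C A \<in> Ob C \<and>
        eta C A \<in> hom C (unit_ob C) (tens_ob C (dual C A) A) \<and>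
        eps C A \<in> hom C (tens_ob C A (dual C A)) (unit_ob C) \<and>
        cmp C (lunit C A) (cmp C (tens_ar C (eps C A) (ident C A))
          (cmp C (assoc_inv C A (dual C A) A)
            (cmp C (tens_ar C (ident C A) (eta C A)) (runit_inv C A)))) = ident C A \<and>
        cmp C (runit C (dual C A)) (cmp C (tens_ar C (ident C (dual C A)) (eps C A))
          (cmp C (assoc C (dual C A) A (dual C A))
            (cmp C (tens_ar C (eta C A) (ident C (dual C A))) (lunit_inv C (dual C A)))))
          = ident C (dual C A))"

definition isomorphic :: "('o, 'a, 'x) cc_data_scheme \<Rightarrow> 'o \<Rightarrow> 'o \<Rightarrow> bool" where
  "isomorphic C A B \<longleftrightarrow> (\<exists>f g. f \<in> hom C A B \<and> g \<in> hom C B A \<and>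
     cmp C g f = ident C A \<and> cmp C f g = ident C B)"

definition internal_hom :: "('o, 'a, 'x) cc_data_scheme \<Rightarrow> 'o \<Rightarrow> 'o \<Rightarrow> 'o" where
  "internal_hom C A B = tens_ob C (dual C A) B"

definition reflexive_obj :: "('o, 'a, 'x) cc_data_scheme \<Rightarrow> 'o \<Rightarrow> bool" where
  "reflexive_obj C R \<longleftrightarrow> (\<exists>app lam. app \<in> hom C R (internal_hom C R R) \<and>
     lam \<in> hom C (internal_hom C R R) R \<and>
     cmp C lam app = ident C R \<and> cmp C app lam = ident C (internal_hom C R R))"

definition self_similar :: "('o, 'a, 'x) cc_data_scheme \<Rightarrow> 'o \<Rightarrow> bool" where
  "self_similar C N \<longleftrightarrow> isomorphic C N (tens_ob C N N)"

definition self_dual :: "('o, 'a, 'x) cc_data_scheme \<Rightarrow> 'o \<Rightarrow> bool" where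
  "self_dual C S \<longleftrightarrow> isomorphic C S (dual C S)"

end

theory Submission
  imports Defs
begin


locale cc = fixes C :: "('o,'a,'x) cc_data_scheme" assumes cc: "compact_closed C"
begin

abbreviation cp (infixr "\<cdot>" 55) where "g \<cdot> f \<equiv> cmp C g f"
abbreviation tn (infixr "\<otimes>" 60) where "f \<otimes> g \<equiv> tens_ar C f g"
abbreviation tb (infixr "\<odot>" 60) where "A \<odot> B \<equiv> tens_ob C A B"
abbreviation "U \<equiv> unit_ob C"
abbreviation "idt \<equiv> ident C"
abbreviation "Obs \<equiv> Ob C"
abbreviation "Ars \<equiv> Ar C"
abbreviation "dm \<equiv> cdom C"
abbreviation "cd \<equiv> ccod C"
abbreviation "\<alpha> \<equiv> assoc C"
abbreviation "\<alpha>' \<equiv> assoc_inv C"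
abbreviation "lu \<equiv> lunit C"
abbreviation "lu' \<equiv> lunit_inv C"
abbreviation "\<rho> \<equiv> runit C"
abbreviation "\<rho>' \<equiv> runit_inv C"
abbreviation "\<sigma> \<equiv> symm C"
abbreviation "ds \<equiv> dual C"
abbreviation "\<eta> \<equiv> eta C"
abbreviation "\<epsilon> \<equiv> eps C"

lemma smc: "symmetric_monoidal_category C" using cc unfolding compact_closed_def by blast
lemma mc: "monoidal_category C" using smc unfolding symmetric_monoidal_category_def by blast
lemma cat: "category C" using mc unfolding monoidal_category_def by (elim conjE) simp

lemma dom_ob[simp]: "f \<in> Ars \<Longrightarrow> dm f \<in> Obs" using cat unfolding category_def by blast
lemma cod_ob[simp]: "f \<in> Ars \<Longrightarrow> cd f \<in> Obs" using cat unfolding category_def by blast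
lemma id_ar[simp]: "A \<in> Obs \<Longrightarrow> idt A \<in> Ars" and id_dom[simp]: "A \<in> Obs \<Longrightarrow> dm (idt A) = A"
  and id_cod[simp]: "A \<in> Obs \<Longrightarrow> cd (idt A) = A"
  using cat unfolding category_def hom_def by auto
lemma cmp_ar[simp]: "f \<in> Ars \<Longrightarrow> g \<in> Ars \<Longrightarrow> cd f = dm g \<Longrightarrow> g \<cdot> f \<in> Ars"
  and cmp_dom[simp]: "f \<in> Ars \<Longrightarrow> g \<in> Ars \<Longrightarrow> cd f = dm g \<Longrightarrow> dm (g \<cdot> f) = dm f"
  and cmp_cod[simp]: "f \<in> Ars \<Longrightarrow> g \<in> Ars \<Longrightarrow> cd f = dm g \<Longrightarrow> cd (g \<cdot> f) = cd g"
  using cat unfolding category_def hom_def seq_def by auto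
lemma cmp_assoc[simp]: "f \<in> Ars \<Longrightarrow> g \<in> Ars \<Longrightarrow> h \<in> Ars \<Longrightarrow> cd f = dm g \<Longrightarrow> cd g = dm h \<Longrightarrow>
   (h \<cdot> g) \<cdot> f = h \<cdot> (g \<cdot> f)"
  using cat unfolding category_def seq_def by metis
lemma id_right[simp]: "f \<in> Ars \<Longrightarrow> dm f = A \<Longrightarrow> f \<cdot> idt A = f"
  using cat unfolding category_def by blast
lemma id_left[simp]: "f \<in> Ars \<Longrightarrow> cd f = A \<Longrightarrow> idt A \<cdot> f = f"
  using cat unfolding category_def by blast

lemma unit_ob[simp]: "U \<in> Obs" using mc unfolding monoidal_category_def by (elim conjE) simp
lemma tens_ob[simp]: "A \<in> Obs \<Longrightarrow> B \<in> Obs \<Longrightarrow> A \<odot> B \<in> Obs" using mc unfolding monoidal_category_def by (elim conjE) simp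
lemma tens_ar[simp]: "f \<in> Ars \<Longrightarrow> g \<in> Ars \<Longrightarrow> f \<otimes> g \<in> Ars"
  and tens_dom[simp]: "f \<in> Ars \<Longrightarrow> g \<in> Ars \<Longrightarrow> dm (f \<otimes> g) = dm f \<odot> dm g"
  and tens_cod[simp]: "f \<in> Ars \<Longrightarrow> g \<in> Ars \<Longrightarrow> cd (f \<otimes> g) = cd f \<odot> cd g"
  using mc unfolding monoidal_category_def hom_def by auto
lemma tens_id[simp]: "A \<in> Obs \<Longrightarrow> B \<in> Obs \<Longrightarrow> idt A \<otimes> idt B = idt (A \<odot> B)"
  using mc unfolding monoidal_category_def by (elim conjE) simp
lemma interchange: "f \<in> Ars \<Longrightarrow> f' \<in> Ars \<Longrightarrow> g \<in> Ars \<Longrightarrow> g' \<in> Ars \<Longrightarrow> cd f = dm f' \<Longrightarrow> cd g = dm g' \<Longrightarrow>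
   (f' \<cdot> f) \<otimes> (g' \<cdot> g) = (f' \<otimes> g') \<cdot> (f \<otimes> g)"
  using mc unfolding monoidal_category_def seq_def by blast

lemma ax_assoc: "\<forall>A \<in> Ob C. \<forall>B \<in> Ob C. \<forall>D \<in> Ob C.
        assoc C A B D \<in> hom C (tens_ob C (tens_ob C A B) D) (tens_ob C A (tens_ob C B D)) \<and>
        inverse_pair C (assoc C A B D) (assoc_inv C A B D)"
  using mc unfolding monoidal_category_def by (elim conjE) assumption
lemma ax_lunit: "\<forall>A \<in> Ob C. lunit C A \<in> hom C (tens_ob C (unit_ob C) A) A \<and>
        inverse_pair C (lunit C A) (lunit_inv C A)"
  using mc unfolding monoidal_category_def by (elim conjE) assumption
lemma ax_runit: "\<forall>A \<in> Ob C. runit C A \<in> hom C (tens_ob C A (unit_ob C)) A \<and>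
        inverse_pair C (runit C A) (runit_inv C A)"
  using mc unfolding monoidal_category_def by (elim conjE) assumption

lemma assoc_facts: "A \<in> Obs \<Longrightarrow> B \<in> Obs \<Longrightarrow> D \<in> Obs \<Longrightarrow>
  \<alpha> A B D \<in> Ars \<and> dm (\<alpha> A B D) = (A \<odot> B) \<odot> D \<and> cd (\<alpha> A B D) = A \<odot> (B \<odot> D) \<and>
  \<alpha>' A B D \<in> Ars \<and> dm (\<alpha>' A B D) = A \<odot> (B \<odot> D) \<and> cd (\<alpha>' A B D) = (A \<odot> B) \<odot> D \<and>
  \<alpha>' A B D \<cdot> \<alpha> A B D = idt ((A \<odot> B) \<odot> D) \<and> \<alpha> A B D \<cdot> \<alpha>' A B D = idt (A \<odot> (B \<odot> D))"
  using ax_assoc[rule_format, of A B D] unfolding hom_def inverse_pair_def by auto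
lemma lunit_facts: "A \<in> Obs \<Longrightarrow>
  lu A \<in> Ars \<and> dm (lu A) = U \<odot> A \<and> cd (lu A) = A \<and>
  lu' A \<in> Ars \<and> dm (lu' A) = A \<and> cd (lu' A) = U \<odot> A \<and>
  lu' A \<cdot> lu A = idt (U \<odot> A) \<and> lu A \<cdot> lu' A = idt A"
  using ax_lunit[rule_format, of A] unfolding hom_def inverse_pair_def by auto
lemma runit_facts: "A \<in> Obs \<Longrightarrow>
  \<rho> A \<in> Ars \<and> dm (\<rho> A) = A \<odot> U \<and> cd (\<rho> A) = A \<and>
  \<rho>' A \<in> Ars \<and> dm (\<rho>' A) = A \<and> cd (\<rho>' A) = A \<odot> U \<and>
  \<rho>' A \<cdot> \<rho> A = idt (A \<odot> U) \<and> \<rho> A \<cdot> \<rho>' A = idt A"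
  using ax_runit[rule_format, of A] unfolding hom_def inverse_pair_def by auto

lemmas assoc_simps[simp] = assoc_facts[THEN conjunct1] assoc_facts[THEN conjunct2, THEN conjunct1]
  assoc_facts[THEN conjunct2, THEN conjunct2, THEN conjunct1]
  assoc_facts[THEN conjunct2, THEN conjunct2, THEN conjunct2, THEN conjunct1]
  assoc_facts[THEN conjunct2, THEN conjunct2, THEN conjunct2, THEN conjunct2, THEN conjunct1]
  assoc_facts[THEN conjunct2, THEN conjunct2, THEN conjunct2, THEN conjunct2, THEN conjunct2, THEN conjunct1]
lemmas lunit_simps[simp] = lunit_facts[THEN conjunct1] lunit_facts[THEN conjunct2, THEN conjunct1]
  lunit_facts[THEN conjunct2, THEN conjunct2, THEN conjunct1]
  lunit_facts[THEN conjunct2, THEN conjunct2, THEN conjunct2, THEN conjunct1]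
  lunit_facts[THEN conjunct2, THEN conjunct2, THEN conjunct2, THEN conjunct2, THEN conjunct1]
  lunit_facts[THEN conjunct2, THEN conjunct2, THEN conjunct2, THEN conjunct2, THEN conjunct2, THEN conjunct1]
lemmas runit_simps[simp] = runit_facts[THEN conjunct1] runit_facts[THEN conjunct2, THEN conjunct1]
  runit_facts[THEN conjunct2, THEN conjunct2, THEN conjunct1]
  runit_facts[THEN conjunct2, THEN conjunct2, THEN conjunct2, THEN conjunct1]
  runit_facts[THEN conjunct2, THEN conjunct2, THEN conjunct2, THEN conjunct2, THEN conjunct1]
  runit_facts[THEN conjunct2, THEN conjunct2, THEN conjunct2, THEN conjunct2, THEN conjunct2, THEN conjunct1]

lemma assoc_inv1: "A \<in> Obs \<Longrightarrow> B \<in> Obs \<Longrightarrow> D \<in> Obs \<Longrightarrow> \<alpha>' A B D \<cdot> \<alpha> A B D = idt ((A \<odot> B) \<odot> D)"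
  and assoc_inv2: "A \<in> Obs \<Longrightarrow> B \<in> Obs \<Longrightarrow> D \<in> Obs \<Longrightarrow> \<alpha> A B D \<cdot> \<alpha>' A B D = idt (A \<odot> (B \<odot> D))"
  using assoc_facts by auto
lemma lunit_inv1: "A \<in> Obs \<Longrightarrow> lu' A \<cdot> lu A = idt (U \<odot> A)" and lunit_inv2: "A \<in> Obs \<Longrightarrow> lu A \<cdot> lu' A = idt A"
  using lunit_facts by auto
lemma runit_inv1: "A \<in> Obs \<Longrightarrow> \<rho>' A \<cdot> \<rho> A = idt (A \<odot> U)" and runit_inv2: "A \<in> Obs \<Longrightarrow> \<rho> A \<cdot> \<rho>' A = idt A"
  using runit_facts by auto


lemma ax_rest: "(\<forall>f \<in> Ar C. \<forall>g \<in> Ar C. \<forall>h \<in> Ar C.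
        cmp C (assoc C (ccod C f) (ccod C g) (ccod C h)) (tens_ar C (tens_ar C f g) h) =
        cmp C (tens_ar C f (tens_ar C g h)) (assoc C (cdom C f) (cdom C g) (cdom C h))) \<and>
     (\<forall>f \<in> Ar C. cmp C (lunit C (ccod C f)) (tens_ar C (ident C (unit_ob C)) f) =
        cmp C f (lunit C (cdom C f))) \<and>
     (\<forall>f \<in> Ar C. cmp C (runit C (ccod C f)) (tens_ar C f (ident C (unit_ob C))) =
        cmp C f (runit C (cdom C f))) \<and>
     (\<forall>A \<in> Ob C. \<forall>B \<in> Ob C. \<forall>D \<in> Ob C. \<forall>E \<in> Ob C.
        cmp C (tens_ar C (ident C A) (assoc C B D E))
          (cmp C (assoc C A (tens_ob C B D) E) (tens_ar C (assoc C A B D) (ident C E))) =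
        cmp C (assoc C A B (tens_ob C D E)) (assoc C (tens_ob C A B) D E)) \<and>
     (\<forall>A \<in> Ob C. \<forall>B \<in> Ob C.
        cmp C (tens_ar C (ident C A) (lunit C B)) (assoc C A (unit_ob C) B) =
        tens_ar C (runit C A) (ident C B))"
  using mc unfolding monoidal_category_def by (elim conjE) (intro conjI; assumption)

lemma assoc_nat: "f \<in> Ars \<Longrightarrow> g \<in> Ars \<Longrightarrow> h \<in> Ars \<Longrightarrow>
  \<alpha> (cd f) (cd g) (cd h) \<cdot> ((f \<otimes> g) \<otimes> h) = (f \<otimes> (g \<otimes> h)) \<cdot> \<alpha> (dm f) (dm g) (dm h)"
  using ax_rest by blast
lemma lunit_nat: "f \<in> Ars \<Longrightarrow> lu (cd f) \<cdot> (idt U \<otimes> f) = f \<cdot> lu (dm f)"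
  using ax_rest by blast
lemma runit_nat: "f \<in> Ars \<Longrightarrow> \<rho> (cd f) \<cdot> (f \<otimes> idt U) = f \<cdot> \<rho> (dm f)"
  using ax_rest by blast
lemma pentagon: "A \<in> Obs \<Longrightarrow> B \<in> Obs \<Longrightarrow> D \<in> Obs \<Longrightarrow> E \<in> Obs \<Longrightarrow>
  (idt A \<otimes> \<alpha> B D E) \<cdot> (\<alpha> A (B \<odot> D) E \<cdot> (\<alpha> A B D \<otimes> idt E)) = \<alpha> A B (D \<odot> E) \<cdot> \<alpha> (A \<odot> B) D E"
  using ax_rest by blast
lemma triangle: "A \<in> Obs \<Longrightarrow> B \<in> Obs \<Longrightarrow> (idt A \<otimes> lu B) \<cdot> \<alpha> A U B = \<rho> A \<otimes> idt B"
  using ax_rest by blast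

lemma ax_sym: "(\<forall>A \<in> Ob C. \<forall>B \<in> Ob C. symm C A B \<in> hom C (tens_ob C A B) (tens_ob C B A)) \<and>
     (\<forall>f \<in> Ar C. \<forall>g \<in> Ar C.
        cmp C (symm C (ccod C f) (ccod C g)) (tens_ar C f g) =
        cmp C (tens_ar C g f) (symm C (cdom C f) (cdom C g))) \<and>
     (\<forall>A \<in> Ob C. \<forall>B \<in> Ob C. cmp C (symm C B A) (symm C A B) = ident C (tens_ob C A B))"
  using smc unfolding symmetric_monoidal_category_def by (elim conjE) (intro conjI; assumption)
lemma sym_ar[simp]: "A \<in> Obs \<Longrightarrow> B \<in> Obs \<Longrightarrow> \<sigma> A B \<in> Ars"
  and sym_dom[simp]: "A \<in> Obs \<Longrightarrow> B \<in> Obs \<Longrightarrow> dm (\<sigma> A B) = A \<odot> B"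
  and sym_cod[simp]: "A \<in> Obs \<Longrightarrow> B \<in> Obs \<Longrightarrow> cd (\<sigma> A B) = B \<odot> A"
  using ax_sym unfolding hom_def by auto
lemma sym_nat: "f \<in> Ars \<Longrightarrow> g \<in> Ars \<Longrightarrow> \<sigma> (cd f) (cd g) \<cdot> (f \<otimes> g) = (g \<otimes> f) \<cdot> \<sigma> (dm f) (dm g)"
  using ax_sym by blast
lemma sym_inv: "A \<in> Obs \<Longrightarrow> B \<in> Obs \<Longrightarrow> \<sigma> B A \<cdot> \<sigma> A B = idt (A \<odot> B)"
  using ax_sym by blast

lemma ax_cc: "\<forall>A \<in> Ob C. dual C A \<in> Ob C \<and>
        eta C A \<in> hom C (unit_ob C) (tens_ob C (dual C A) A) \<and>
        eps C A \<in> hom C (tens_ob C A (dual C A)) (unit_ob C) \<and>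
        cmp C (lunit C A) (cmp C (tens_ar C (eps C A) (ident C A))
          (cmp C (assoc_inv C A (dual C A) A)
            (cmp C (tens_ar C (ident C A) (eta C A)) (runit_inv C A)))) = ident C A \<and>
        cmp C (runit C (dual C A)) (cmp C (tens_ar C (ident C (dual C A)) (eps C A))
          (cmp C (assoc C (dual C A) A (dual C A))
            (cmp C (tens_ar C (eta C A) (ident C (dual C A))) (lunit_inv C (dual C A)))))
          = ident C (dual C A)"
  using cc unfolding compact_closed_def by (elim conjE) assumption
lemma dual_ob[simp]: "A \<in> Obs \<Longrightarrow> ds A \<in> Obs"
  and eta_ar[simp]: "A \<in> Obs \<Longrightarrow> \<eta> A \<in> Ars"
  and eta_dom[simp]: "A \<in> Obs \<Longrightarrow> dm (\<eta> A) = U"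
  and eta_cod[simp]: "A \<in> Obs \<Longrightarrow> cd (\<eta> A) = ds A \<odot> A"
  and eps_ar[simp]: "A \<in> Obs \<Longrightarrow> \<epsilon> A \<in> Ars"
  and eps_dom[simp]: "A \<in> Obs \<Longrightarrow> dm (\<epsilon> A) = A \<odot> ds A"
  and eps_cod[simp]: "A \<in> Obs \<Longrightarrow> cd (\<epsilon> A) = U"
  using ax_cc unfolding hom_def by auto
lemma yank1: "A \<in> Obs \<Longrightarrow> lu A \<cdot> ((\<epsilon> A \<otimes> idt A) \<cdot> (\<alpha>' A (ds A) A \<cdot> ((idt A \<otimes> \<eta> A) \<cdot> \<rho>' A))) = idt A"
  using ax_cc by blast
lemma yank2: "A \<in> Obs \<Longrightarrow> \<rho> (ds A) \<cdot> ((idt (ds A) \<otimes> \<epsilon> A) \<cdot> (\<alpha> (ds A) A (ds A) \<cdot> ((\<eta> A \<otimes> idt (ds A)) \<cdot> lu' (ds A)))) = idt (ds A)"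
  using ax_cc by blast

end


context cc begin

lemma ctx2: "x \<cdot> y = q \<Longrightarrow> x \<in> Ars \<Longrightarrow> y \<in> Ars \<Longrightarrow> r \<in> Ars \<Longrightarrow> cd y = dm x \<Longrightarrow> cd r = dm y \<Longrightarrow>
  x \<cdot> (y \<cdot> r) = q \<cdot> r"
  by (metis cmp_ar cmp_assoc cmp_dom)
lemma ctx3: "x \<cdot> (y \<cdot> z) = q \<Longrightarrow> x \<in> Ars \<Longrightarrow> y \<in> Ars \<Longrightarrow> z \<in> Ars \<Longrightarrow> r \<in> Ars \<Longrightarrow>
  cd y = dm x \<Longrightarrow> cd z = dm y \<Longrightarrow> cd r = dm z \<Longrightarrow>
  x \<cdot> (y \<cdot> (z \<cdot> r)) = q \<cdot> r"
  by (metis cmp_ar cmp_assoc cmp_dom cmp_cod)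
lemma ctx4: "x \<cdot> (y \<cdot> (z \<cdot> w)) = q \<Longrightarrow> x \<in> Ars \<Longrightarrow> y \<in> Ars \<Longrightarrow> z \<in> Ars \<Longrightarrow> w \<in> Ars \<Longrightarrow> r \<in> Ars \<Longrightarrow>
  cd y = dm x \<Longrightarrow> cd z = dm y \<Longrightarrow> cd w = dm z \<Longrightarrow> cd r = dm w \<Longrightarrow>
  x \<cdot> (y \<cdot> (z \<cdot> (w \<cdot> r))) = q \<cdot> r"
  by (metis cmp_ar cmp_assoc cmp_dom cmp_cod)

lemma split_r[simp]: "f \<in> Ars \<Longrightarrow> g \<in> Ars \<Longrightarrow> cd g = dm f \<Longrightarrow> B \<in> Obs \<Longrightarrow>
  (f \<cdot> g) \<otimes> idt B = (f \<otimes> idt B) \<cdot> (g \<otimes> idt B)"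
  using interchange[of g f "idt B" "idt B"] by simp
lemma split_l[simp]: "f \<in> Ars \<Longrightarrow> g \<in> Ars \<Longrightarrow> cd g = dm f \<Longrightarrow> B \<in> Obs \<Longrightarrow>
  idt B \<otimes> (f \<cdot> g) = (idt B \<otimes> f) \<cdot> (idt B \<otimes> g)"
  using interchange[of "idt B" "idt B" g f] by simp

lemma inv_cancels[simp]:
  "A \<in> Obs \<Longrightarrow> B \<in> Obs \<Longrightarrow> D \<in> Obs \<Longrightarrow> \<alpha>' A B D \<cdot> \<alpha> A B D = idt ((A \<odot> B) \<odot> D)"
  "A \<in> Obs \<Longrightarrow> B \<in> Obs \<Longrightarrow> D \<in> Obs \<Longrightarrow> \<alpha> A B D \<cdot> \<alpha>' A B D = idt (A \<odot> (B \<odot> D))"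
  "A \<in> Obs \<Longrightarrow> lu' A \<cdot> lu A = idt (U \<odot> A)"
  "A \<in> Obs \<Longrightarrow> lu A \<cdot> lu' A = idt A"
  "A \<in> Obs \<Longrightarrow> \<rho>' A \<cdot> \<rho> A = idt (A \<odot> U)"
  "A \<in> Obs \<Longrightarrow> \<rho> A \<cdot> \<rho>' A = idt A"
  "A \<in> Obs \<Longrightarrow> B \<in> Obs \<Longrightarrow> \<sigma> B A \<cdot> \<sigma> A B = idt (A \<odot> B)"
  by (auto simp: assoc_inv1 assoc_inv2 lunit_inv1 lunit_inv2 runit_inv1 runit_inv2 sym_inv)

lemma inv_cancels_ctx[simp]:
  "A \<in> Obs \<Longrightarrow> B \<in> Obs \<Longrightarrow> D \<in> Obs \<Longrightarrow> r \<in> Ars \<Longrightarrow> cd r = (A \<odot> B) \<odot> D \<Longrightarrow> \<alpha>' A B D \<cdot> (\<alpha> A B D \<cdot> r) = r"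
  "A \<in> Obs \<Longrightarrow> B \<in> Obs \<Longrightarrow> D \<in> Obs \<Longrightarrow> r \<in> Ars \<Longrightarrow> cd r = A \<odot> (B \<odot> D) \<Longrightarrow> \<alpha> A B D \<cdot> (\<alpha>' A B D \<cdot> r) = r"
  "A \<in> Obs \<Longrightarrow> r \<in> Ars \<Longrightarrow> cd r = U \<odot> A \<Longrightarrow> lu' A \<cdot> (lu A \<cdot> r) = r"
  "A \<in> Obs \<Longrightarrow> r \<in> Ars \<Longrightarrow> cd r = A \<Longrightarrow> lu A \<cdot> (lu' A \<cdot> r) = r"
  "A \<in> Obs \<Longrightarrow> r \<in> Ars \<Longrightarrow> cd r = A \<odot> U \<Longrightarrow> \<rho>' A \<cdot> (\<rho> A \<cdot> r) = r"
  "A \<in> Obs \<Longrightarrow> r \<in> Ars \<Longrightarrow> cd r = A \<Longrightarrow> \<rho> A \<cdot> (\<rho>' A \<cdot> r) = r"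
  "A \<in> Obs \<Longrightarrow> B \<in> Obs \<Longrightarrow> r \<in> Ars \<Longrightarrow> cd r = A \<odot> B \<Longrightarrow> \<sigma> B A \<cdot> (\<sigma> A B \<cdot> r) = r"
  by (simp_all del: cmp_assoc add: cmp_assoc[symmetric])

end


context cc begin

lemma cancel_r: "X \<in> Ars \<Longrightarrow> Y \<in> Ars \<Longrightarrow> P \<in> Ars \<Longrightarrow> Q \<in> Ars \<Longrightarrow> cd P = dm X \<Longrightarrow> cd P = dm Y \<Longrightarrow>
  cd Q = dm P \<Longrightarrow> P \<cdot> Q = idt (cd P) \<Longrightarrow> X \<cdot> P = Y \<cdot> P \<Longrightarrow> X = Y"
  by (metis cmp_assoc id_right)
lemma cancel_l: "X \<in> Ars \<Longrightarrow> Y \<in> Ars \<Longrightarrow> P \<in> Ars \<Longrightarrow> Q \<in> Ars \<Longrightarrow> cd X = dm P \<Longrightarrow> cd Y = dm P \<Longrightarrow>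
  cd P = dm Q \<Longrightarrow> Q \<cdot> P = idt (dm P) \<Longrightarrow> P \<cdot> X = P \<cdot> Y \<Longrightarrow> X = Y"
  by (metis cmp_assoc id_left)

lemma inv_tens_r[simp]: "f \<in> Ars \<Longrightarrow> g \<in> Ars \<Longrightarrow> cd g = dm f \<Longrightarrow> B \<in> Obs \<Longrightarrow> f \<cdot> g = idt (dm g) \<Longrightarrow>
  (f \<otimes> idt B) \<cdot> (g \<otimes> idt B) = idt (dm g \<odot> B)"
  using interchange[of g f "idt B" "idt B"] by simp
lemma inv_tens_l[simp]: "f \<in> Ars \<Longrightarrow> g \<in> Ars \<Longrightarrow> cd g = dm f \<Longrightarrow> B \<in> Obs \<Longrightarrow> f \<cdot> g = idt (dm g) \<Longrightarrow>
  (idt B \<otimes> f) \<cdot> (idt B \<otimes> g) = idt (B \<odot> dm g)"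
  using interchange[of "idt B" "idt B" g f] by simp
lemma inv_tens_r_ctx[simp]: "f \<in> Ars \<Longrightarrow> g \<in> Ars \<Longrightarrow> cd g = dm f \<Longrightarrow> B \<in> Obs \<Longrightarrow> f \<cdot> g = idt (dm g) \<Longrightarrow>
  r \<in> Ars \<Longrightarrow> cd r = dm g \<odot> B \<Longrightarrow> (f \<otimes> idt B) \<cdot> ((g \<otimes> idt B) \<cdot> r) = r"
  using ctx2[OF inv_tens_r, of f g B r] by simp
lemma inv_tens_l_ctx[simp]: "f \<in> Ars \<Longrightarrow> g \<in> Ars \<Longrightarrow> cd g = dm f \<Longrightarrow> B \<in> Obs \<Longrightarrow> f \<cdot> g = idt (dm g) \<Longrightarrow>
  r \<in> Ars \<Longrightarrow> cd r = B \<odot> dm g \<Longrightarrow> (idt B \<otimes> f) \<cdot> ((idt B \<otimes> g) \<cdot> r) = r"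
  using ctx2[OF inv_tens_l, of f g B r] by simp

lemma unitU_cancel: "f \<in> Ars \<Longrightarrow> g \<in> Ars \<Longrightarrow> dm f = dm g \<Longrightarrow> cd f = cd g \<Longrightarrow> idt U \<otimes> f = idt U \<otimes> g \<Longrightarrow> f = g"
proof -
  have k: "h = lu (cd h) \<cdot> ((idt U \<otimes> h) \<cdot> lu' (dm h))" if "h \<in> Ars" for h
    using ctx2[OF lunit_nat[OF that], of "lu' (dm h)"] that by simp
  assume "f \<in> Ars" "g \<in> Ars" "dm f = dm g" "cd f = cd g" "idt U \<otimes> f = idt U \<otimes> g"
  then show ?thesis using k[of f] k[of g] by metis
qed

lemma kelly_l: assumes A: "A \<in> Obs" and B: "B \<in> Obs"
  shows "lu (A \<odot> B) \<cdot> \<alpha> U A B = lu A \<otimes> idt B"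
proof -
  have pent: "(idt U \<otimes> \<alpha> U A B) \<cdot> (\<alpha> U (U \<odot> A) B \<cdot> (\<alpha> U U A \<otimes> idt B)) = \<alpha> U U (A \<odot> B) \<cdot> \<alpha> (U \<odot> U) A B"
    using pentagon[of U U A B] A B by simp
  have tri1: "(idt U \<otimes> lu (A \<odot> B)) \<cdot> \<alpha> U U (A \<odot> B) = \<rho> U \<otimes> idt (A \<odot> B)"
    using triangle[of U "A \<odot> B"] A B by simp
  have nat1: "(\<rho> U \<otimes> idt (A \<odot> B)) \<cdot> \<alpha> (U \<odot> U) A B = \<alpha> U A B \<cdot> ((\<rho> U \<otimes> idt A) \<otimes> idt B)"
    using assoc_nat[of "\<rho> U" "idt A" "idt B"] A B by simp
  have tri2: "\<rho> U \<otimes> idt A = (idt U \<otimes> lu A) \<cdot> \<alpha> U U A"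
    using triangle[of U A] A by simp
  have nat2: "\<alpha> U A B \<cdot> ((idt U \<otimes> lu A) \<otimes> idt B) = (idt U \<otimes> (lu A \<otimes> idt B)) \<cdot> \<alpha> U (U \<odot> A) B"
    using assoc_nat[of "idt U" "lu A" "idt B"] A B by simp
  have "(idt U \<otimes> (lu (A \<odot> B) \<cdot> \<alpha> U A B)) \<cdot> (\<alpha> U (U \<odot> A) B \<cdot> (\<alpha> U U A \<otimes> idt B))
     = (idt U \<otimes> lu (A \<odot> B)) \<cdot> (\<alpha> U U (A \<odot> B) \<cdot> \<alpha> (U \<odot> U) A B)"
    using A B by (simp add: pent)
  also have "\<dots> = (\<rho> U \<otimes> idt (A \<odot> B)) \<cdot> \<alpha> (U \<odot> U) A B"
    using A B by (simp add: ctx2[OF tri1] del: tens_id)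
  also have "\<dots> = \<alpha> U A B \<cdot> ((\<rho> U \<otimes> idt A) \<otimes> idt B)" by (rule nat1)
  also have "\<dots> = \<alpha> U A B \<cdot> (((idt U \<otimes> lu A) \<otimes> idt B) \<cdot> (\<alpha> U U A \<otimes> idt B))"
    using A B by (simp add: tri2)
  also have "\<dots> = (idt U \<otimes> (lu A \<otimes> idt B)) \<cdot> (\<alpha> U (U \<odot> A) B \<cdot> (\<alpha> U U A \<otimes> idt B))"
    using A B by (simp add: ctx2[OF nat2])
  finally have e: "(idt U \<otimes> (lu (A \<odot> B) \<cdot> \<alpha> U A B)) \<cdot> (\<alpha> U (U \<odot> A) B \<cdot> (\<alpha> U U A \<otimes> idt B))
     = (idt U \<otimes> (lu A \<otimes> idt B)) \<cdot> (\<alpha> U (U \<odot> A) B \<cdot> (\<alpha> U U A \<otimes> idt B))" .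
  have "idt U \<otimes> (lu (A \<odot> B) \<cdot> \<alpha> U A B) = idt U \<otimes> (lu A \<otimes> idt B)"
    apply (rule cancel_r[OF _ _ _ _ _ _ _ _ e, where Q = "(\<alpha>' U U A \<otimes> idt B) \<cdot> \<alpha>' U (U \<odot> A) B"])
    using A B by simp_all
  then show ?thesis
    apply (rule unitU_cancel[rotated 4]) using A B by simp_all
qed


lemma unitU_cancel_r: "f \<in> Ars \<Longrightarrow> g \<in> Ars \<Longrightarrow> dm f = dm g \<Longrightarrow> cd f = cd g \<Longrightarrow> f \<otimes> idt U = g \<otimes> idt U \<Longrightarrow> f = g"
proof -
  have k: "h = \<rho> (cd h) \<cdot> ((h \<otimes> idt U) \<cdot> \<rho>' (dm h))" if "h \<in> Ars" for h
    using ctx2[OF runit_nat[OF that], of "\<rho>' (dm h)"] that by simp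
  assume "f \<in> Ars" "g \<in> Ars" "dm f = dm g" "cd f = cd g" "f \<otimes> idt U = g \<otimes> idt U"
  then show ?thesis using k[of f] k[of g] by metis
qed

lemma kelly_r: assumes A: "A \<in> Obs" and B: "B \<in> Obs"
  shows "\<rho> (A \<odot> B) = (idt A \<otimes> \<rho> B) \<cdot> \<alpha> A B U"
proof -
  have tri1: "\<rho> (A \<odot> B) \<otimes> idt U = (idt (A \<odot> B) \<otimes> lu U) \<cdot> \<alpha> (A \<odot> B) U U"
    using triangle[of "A \<odot> B" U] A B by simp
  have nat1: "\<alpha> A B U \<cdot> (idt (A \<odot> B) \<otimes> lu U) = (idt A \<otimes> (idt B \<otimes> lu U)) \<cdot> \<alpha> A B (U \<odot> U)"
    using assoc_nat[of "idt A" "idt B" "lu U"] A B by simp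
  have pent: "\<alpha> A B (U \<odot> U) \<cdot> \<alpha> (A \<odot> B) U U = (idt A \<otimes> \<alpha> B U U) \<cdot> (\<alpha> A (B \<odot> U) U \<cdot> (\<alpha> A B U \<otimes> idt U))"
    using pentagon[of A B U U] A B by simp
  have tri2: "(idt A \<otimes> (idt B \<otimes> lu U)) \<cdot> (idt A \<otimes> \<alpha> B U U) = idt A \<otimes> (\<rho> B \<otimes> idt U)"
    using triangle[of B U] A B by (simp add: split_l[symmetric] del: split_l)
  have nat2: "(idt A \<otimes> (\<rho> B \<otimes> idt U)) \<cdot> \<alpha> A (B \<odot> U) U = \<alpha> A B U \<cdot> ((idt A \<otimes> \<rho> B) \<otimes> idt U)"
    using assoc_nat[of "idt A" "\<rho> B" "idt U"] A B by simp
  have "\<alpha> A B U \<cdot> (\<rho> (A \<odot> B) \<otimes> idt U) = \<alpha> A B U \<cdot> ((idt (A \<odot> B) \<otimes> lu U) \<cdot> \<alpha> (A \<odot> B) U U)"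
    by (simp add: tri1)
  also have "\<dots> = (idt A \<otimes> (idt B \<otimes> lu U)) \<cdot> (\<alpha> A B (U \<odot> U) \<cdot> \<alpha> (A \<odot> B) U U)"
    using A B by (simp add: ctx2[OF nat1] del: tens_id)
  also have "\<dots> = (idt A \<otimes> (idt B \<otimes> lu U)) \<cdot> ((idt A \<otimes> \<alpha> B U U) \<cdot> (\<alpha> A (B \<odot> U) U \<cdot> (\<alpha> A B U \<otimes> idt U)))"
    by (simp add: pent)
  also have "\<dots> = (idt A \<otimes> (\<rho> B \<otimes> idt U)) \<cdot> (\<alpha> A (B \<odot> U) U \<cdot> (\<alpha> A B U \<otimes> idt U))"
    using A B by (simp add: ctx2[OF tri2] del: tens_id)
  also have "\<dots> = \<alpha> A B U \<cdot> (((idt A \<otimes> \<rho> B) \<cdot> \<alpha> A B U) \<otimes> idt U)"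
    using A B by (simp add: ctx2[OF nat2] del: tens_id)
  finally have e: "\<alpha> A B U \<cdot> (\<rho> (A \<odot> B) \<otimes> idt U) = \<alpha> A B U \<cdot> (((idt A \<otimes> \<rho> B) \<cdot> \<alpha> A B U) \<otimes> idt U)" .
  have "\<rho> (A \<odot> B) \<otimes> idt U = ((idt A \<otimes> \<rho> B) \<cdot> \<alpha> A B U) \<otimes> idt U"
    apply (rule cancel_l[OF _ _ _ _ _ _ _ _ e, where Q = "\<alpha>' A B U"])
    using A B by (simp_all del: split_r)
  then show ?thesis
    apply (rule unitU_cancel_r[rotated 4]) using A B by simp_all
qed


lemma assoc'_nat: assumes "f \<in> Ars" "g \<in> Ars" "h \<in> Ars"
  shows "\<alpha>' (cd f) (cd g) (cd h) \<cdot> (f \<otimes> (g \<otimes> h)) = ((f \<otimes> g) \<otimes> h) \<cdot> \<alpha>' (dm f) (dm g) (dm h)"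
proof -
  have "\<alpha>' (cd f) (cd g) (cd h) \<cdot> (\<alpha> (cd f) (cd g) (cd h) \<cdot> (((f \<otimes> g) \<otimes> h) \<cdot> \<alpha>' (dm f) (dm g) (dm h)))
     = \<alpha>' (cd f) (cd g) (cd h) \<cdot> ((f \<otimes> (g \<otimes> h)) \<cdot> (\<alpha> (dm f) (dm g) (dm h) \<cdot> \<alpha>' (dm f) (dm g) (dm h)))"
    using assms by (simp add: ctx2[OF assoc_nat])
  then show ?thesis using assms by simp
qed

lemma lunit'_nat: assumes "f \<in> Ars" shows "lu' (cd f) \<cdot> f = (idt U \<otimes> f) \<cdot> lu' (dm f)"
proof -
  have "lu' (cd f) \<cdot> (f \<cdot> (lu (dm f) \<cdot> lu' (dm f))) = lu' (cd f) \<cdot> (lu (cd f) \<cdot> ((idt U \<otimes> f) \<cdot> lu' (dm f)))"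
    using assms by (simp add: ctx2[OF lunit_nat])
  then show ?thesis using assms by simp
qed
lemma runit'_nat: assumes "f \<in> Ars" shows "\<rho>' (cd f) \<cdot> f = (f \<otimes> idt U) \<cdot> \<rho>' (dm f)"
proof -
  have "\<rho>' (cd f) \<cdot> (f \<cdot> (\<rho> (dm f) \<cdot> \<rho>' (dm f))) = \<rho>' (cd f) \<cdot> (\<rho> (cd f) \<cdot> ((f \<otimes> idt U) \<cdot> \<rho>' (dm f)))"
    using assms by (simp add: ctx2[OF runit_nat])
  then show ?thesis using assms by simp
qed

lemma triangle': assumes A: "A \<in> Obs" and B: "B \<in> Obs"
  shows "\<alpha>' A U B \<cdot> (idt A \<otimes> lu' B) = \<rho>' A \<otimes> idt B"
proof -
  have "(\<rho>' A \<otimes> idt B) \<cdot> ((\<rho> A \<otimes> idt B) \<cdot> (\<alpha>' A U B \<cdot> (idt A \<otimes> lu' B))) = \<rho>' A \<otimes> idt B"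
    using A B by (simp add: triangle[symmetric])
  then show ?thesis using A B by simp
qed

lemma kelly_l': assumes A: "A \<in> Obs" and B: "B \<in> Obs"
  shows "\<alpha>' U A B \<cdot> lu' (A \<odot> B) = lu' A \<otimes> idt B"
proof -
  have "(lu' A \<otimes> idt B) \<cdot> ((lu A \<otimes> idt B) \<cdot> (\<alpha>' U A B \<cdot> lu' (A \<odot> B))) = lu' A \<otimes> idt B"
    using A B by (simp add: kelly_l[symmetric])
  then show ?thesis using A B by simp
qed

lemma kelly_r': assumes A: "A \<in> Obs" and B: "B \<in> Obs"
  shows "\<rho>' (A \<odot> B) = \<alpha>' A B U \<cdot> (idt A \<otimes> \<rho>' B)"
proof -
  have "\<rho>' (A \<odot> B) \<cdot> ((idt A \<otimes> \<rho> B) \<cdot> (\<alpha> A B U \<cdot> (\<alpha>' A B U \<cdot> (idt A \<otimes> \<rho>' B))))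
      = \<rho>' (A \<odot> B) \<cdot> (\<rho> (A \<odot> B) \<cdot> (\<alpha>' A B U \<cdot> (idt A \<otimes> \<rho>' B)))"
    using A B by (simp add: kelly_r)
  then show ?thesis using A B by simp
qed

end


context cc begin

lemma ctx5: "x \<cdot> (y \<cdot> (z \<cdot> (w \<cdot> v))) = q \<Longrightarrow> x \<in> Ars \<Longrightarrow> y \<in> Ars \<Longrightarrow> z \<in> Ars \<Longrightarrow> w \<in> Ars \<Longrightarrow> v \<in> Ars \<Longrightarrow> r \<in> Ars \<Longrightarrow>
  cd y = dm x \<Longrightarrow> cd z = dm y \<Longrightarrow> cd w = dm z \<Longrightarrow> cd v = dm w \<Longrightarrow> cd r = dm v \<Longrightarrow>
  x \<cdot> (y \<cdot> (z \<cdot> (w \<cdot> (v \<cdot> r)))) = q \<cdot> r"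
proof -
  assume h: "x \<cdot> (y \<cdot> (z \<cdot> (w \<cdot> v))) = q" and t: "x \<in> Ars" "y \<in> Ars" "z \<in> Ars" "w \<in> Ars" "v \<in> Ars" "r \<in> Ars"
    "cd y = dm x" "cd z = dm y" "cd w = dm z" "cd v = dm w" "cd r = dm v"
  have "(x \<cdot> (y \<cdot> (z \<cdot> (w \<cdot> v)))) \<cdot> r = x \<cdot> (y \<cdot> (z \<cdot> (w \<cdot> (v \<cdot> r))))" using t by simp
  then show ?thesis using h by metis
qed

definition LT where "LT A Z f = lu Z \<cdot> ((\<epsilon> A \<otimes> idt Z) \<cdot> (\<alpha>' A (ds A) Z \<cdot> (idt A \<otimes> f)))"
definition LTi where "LTi A X g = (idt (ds A) \<otimes> g) \<cdot> (\<alpha> (ds A) A X \<cdot> ((\<eta> A \<otimes> idt X) \<cdot> lu' X))"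

lemma pent_LT: assumes A: "A \<in> Obs" and X: "X \<in> Obs"
  shows "\<alpha>' A (ds A) (A \<odot> X) \<cdot> (idt A \<otimes> \<alpha> (ds A) A X)
     = \<alpha> (A \<odot> ds A) A X \<cdot> ((\<alpha>' A (ds A) A \<otimes> idt X) \<cdot> \<alpha>' A (ds A \<odot> A) X)"
  using ctx3[OF pentagon[of A "ds A" A X], of "(\<alpha>' A (ds A) A \<otimes> idt X) \<cdot> \<alpha>' A (ds A \<odot> A) X"] A X
  by simp

lemma LT1: assumes A: "A \<in> Obs" and X: "X \<in> Obs" and Z: "Z \<in> Obs"
  and g: "g \<in> Ars" "dm g = A \<odot> X" "cd g = Z"
  shows "LT A Z (LTi A X g) = g"
proof -
  have n1: "\<alpha>' A (ds A) Z \<cdot> (idt A \<otimes> (idt (ds A) \<otimes> g)) = (idt (A \<odot> ds A) \<otimes> g) \<cdot> \<alpha>' A (ds A) (A \<odot> X)"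
    using assoc'_nat[of "idt A" "idt (ds A)" g] A X Z g by simp
  have n2: "(\<epsilon> A \<otimes> idt Z) \<cdot> (idt (A \<odot> ds A) \<otimes> g) = (idt U \<otimes> g) \<cdot> (\<epsilon> A \<otimes> idt (A \<odot> X))"
    using interchange[of "idt (A \<odot> ds A)" "\<epsilon> A" g "idt Z"] interchange[of "\<epsilon> A" "idt U" "idt (A \<odot> X)" g] A X Z g
    by simp
  have n3: "lu Z \<cdot> (idt U \<otimes> g) = g \<cdot> lu (A \<odot> X)"
    using lunit_nat[of g] A X Z g by simp
  have p2: "\<alpha>' A (ds A \<odot> A) X \<cdot> (idt A \<otimes> (\<eta> A \<otimes> idt X)) = ((idt A \<otimes> \<eta> A) \<otimes> idt X) \<cdot> \<alpha>' A U X"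
    using assoc'_nat[of "idt A" "\<eta> A" "idt X"] A X by simp
  have p4: "(\<epsilon> A \<otimes> idt (A \<odot> X)) \<cdot> \<alpha> (A \<odot> ds A) A X = \<alpha> U A X \<cdot> ((\<epsilon> A \<otimes> idt A) \<otimes> idt X)"
    using assoc_nat[of "\<epsilon> A" "idt A" "idt X"] A X by simp
  have p6: "(lu A \<otimes> idt X) \<cdot> (((\<epsilon> A \<otimes> idt A) \<otimes> idt X) \<cdot> ((\<alpha>' A (ds A) A \<otimes> idt X) \<cdot> (((idt A \<otimes> \<eta> A) \<otimes> idt X) \<cdot> (\<rho>' A \<otimes> idt X)))) = idt (A \<odot> X)"
    using arg_cong[OF yank1[OF A], of "\<lambda>h. h \<otimes> idt X"] A X by simp
  show ?thesis unfolding LT_def LTi_def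
    using A X Z g by (simp add: ctx2[OF n1] ctx2[OF n2] ctx2[OF n3] ctx2[OF pent_LT] ctx2[OF p2] triangle'
       ctx2[OF p4] ctx2[OF kelly_l] p6)
qed


lemma pent_LT2: assumes A: "A \<in> Obs" and Z: "Z \<in> Obs"
  shows "(idt (ds A) \<otimes> \<alpha>' A (ds A) Z) \<cdot> \<alpha> (ds A) A (ds A \<odot> Z)
     = \<alpha> (ds A) (A \<odot> ds A) Z \<cdot> ((\<alpha> (ds A) A (ds A) \<otimes> idt Z) \<cdot> \<alpha>' (ds A \<odot> A) (ds A) Z)"
  using arg_cong[OF pentagon[of "ds A" A "ds A" Z],
      of "\<lambda>h. (idt (ds A) \<otimes> \<alpha>' A (ds A) Z) \<cdot> (h \<cdot> \<alpha>' (ds A \<odot> A) (ds A) Z)"] A Z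
  by simp

lemma LT2: assumes A: "A \<in> Obs" and X: "X \<in> Obs" and Z: "Z \<in> Obs"
  and f: "f \<in> Ars" "dm f = X" "cd f = ds A \<odot> Z"
  shows "LTi A X (LT A Z f) = f"
proof -
  have q1: "(idt (ds A) \<otimes> (idt A \<otimes> f)) \<cdot> \<alpha> (ds A) A X = \<alpha> (ds A) A (ds A \<odot> Z) \<cdot> (idt (ds A \<odot> A) \<otimes> f)"
    using assoc_nat[of "idt (ds A)" "idt A" f] A X Z f by simp
  have q2: "(idt (ds A \<odot> A) \<otimes> f) \<cdot> (\<eta> A \<otimes> idt X) = (\<eta> A \<otimes> idt (ds A \<odot> Z)) \<cdot> (idt U \<otimes> f)"
    using interchange[of "\<eta> A" "idt (ds A \<odot> A)" "idt X" f] interchange[of "idt U" "\<eta> A" f "idt (ds A \<odot> Z)"] A X Z f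
    by simp
  have q3: "(idt U \<otimes> f) \<cdot> lu' X = lu' (ds A \<odot> Z) \<cdot> f"
    using lunit'_nat[of f] A X Z f by simp
  have r2: "\<alpha>' (ds A \<odot> A) (ds A) Z \<cdot> (\<eta> A \<otimes> idt (ds A \<odot> Z)) = ((\<eta> A \<otimes> idt (ds A)) \<otimes> idt Z) \<cdot> \<alpha>' U (ds A) Z"
    using assoc'_nat[of "\<eta> A" "idt (ds A)" "idt Z"] A Z by simp
  have r4: "(idt (ds A) \<otimes> (\<epsilon> A \<otimes> idt Z)) \<cdot> \<alpha> (ds A) (A \<odot> ds A) Z = \<alpha> (ds A) U Z \<cdot> ((idt (ds A) \<otimes> \<epsilon> A) \<otimes> idt Z)"
    using assoc_nat[of "idt (ds A)" "\<epsilon> A" "idt Z"] A Z by simp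
  have r6: "(\<rho> (ds A) \<otimes> idt Z) \<cdot> (((idt (ds A) \<otimes> \<epsilon> A) \<otimes> idt Z) \<cdot> ((\<alpha> (ds A) A (ds A) \<otimes> idt Z) \<cdot> (((\<eta> A \<otimes> idt (ds A)) \<otimes> idt Z) \<cdot> (lu' (ds A) \<otimes> idt Z)))) = idt (ds A \<odot> Z)"
    using arg_cong[OF yank2[OF A], of "\<lambda>h. h \<otimes> idt Z"] A Z by simp
  show ?thesis unfolding LT_def LTi_def
    using A X Z f by (simp add: ctx2[OF q1] ctx2[OF q2] q3 ctx2[OF pent_LT2] ctx2[OF r2] ctx2[OF kelly_l']
       ctx2[OF r4] ctx2[OF triangle] ctx5[OF r6])
qed


definition RT where "RT A Z f = \<rho> Z \<cdot> ((idt Z \<otimes> \<epsilon> A) \<cdot> (\<alpha> Z A (ds A) \<cdot> (f \<otimes> idt (ds A))))"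
definition RTi where "RTi A Y h = (h \<otimes> idt A) \<cdot> (\<alpha>' Y (ds A) A \<cdot> ((idt Y \<otimes> \<eta> A) \<cdot> \<rho>' Y))"

lemma tri_a: assumes "A \<in> Obs" "B \<in> Obs" shows "\<alpha> A U B \<cdot> (\<rho>' A \<otimes> idt B) = idt A \<otimes> lu' B"
  using arg_cong[OF triangle[of A B], of "\<lambda>h. (idt A \<otimes> lu' B) \<cdot> (h \<cdot> (\<rho>' A \<otimes> idt B))"] assms by simp
lemma tri_b: assumes "A \<in> Obs" "B \<in> Obs" shows "(\<rho> A \<otimes> idt B) \<cdot> \<alpha>' A U B = idt A \<otimes> lu B"
  using arg_cong[OF triangle[of A B], of "\<lambda>h. h \<cdot> \<alpha>' A U B"] assms by simp

lemma RT1: assumes A: "A \<in> Obs" and Y: "Y \<in> Obs" and Z: "Z \<in> Obs"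
  and h: "h \<in> Ars" "dm h = Y \<odot> ds A" "cd h = Z"
  shows "RT A Z (RTi A Y h) = h"
proof -
  have s1: "\<alpha> Z A (ds A) \<cdot> ((h \<otimes> idt A) \<otimes> idt (ds A)) = (h \<otimes> idt (A \<odot> ds A)) \<cdot> \<alpha> (Y \<odot> ds A) A (ds A)"
    using assoc_nat[of h "idt A" "idt (ds A)"] A Y Z h by simp
  have s2: "(idt Z \<otimes> \<epsilon> A) \<cdot> (h \<otimes> idt (A \<odot> ds A)) = (h \<otimes> idt U) \<cdot> (idt (Y \<odot> ds A) \<otimes> \<epsilon> A)"
    using interchange[of h "idt Z" "idt (A \<odot> ds A)" "\<epsilon> A"] interchange[of "idt (Y \<odot> ds A)" h "\<epsilon> A" "idt U"] A Y Z h
    by simp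
  have s3: "\<rho> Z \<cdot> (h \<otimes> idt U) = h \<cdot> \<rho> (Y \<odot> ds A)"
    using runit_nat[of h] A Y Z h by simp
  have t1: "\<rho> (Y \<odot> ds A) = (idt Y \<otimes> \<rho> (ds A)) \<cdot> \<alpha> Y (ds A) U"
    using kelly_r A Y by simp
  have t2: "\<alpha> Y (ds A) U \<cdot> (idt (Y \<odot> ds A) \<otimes> \<epsilon> A) = (idt Y \<otimes> (idt (ds A) \<otimes> \<epsilon> A)) \<cdot> \<alpha> Y (ds A) (A \<odot> ds A)"
    using assoc_nat[of "idt Y" "idt (ds A)" "\<epsilon> A"] A Y by simp
  have t3: "\<alpha> Y (ds A) (A \<odot> ds A) \<cdot> (\<alpha> (Y \<odot> ds A) A (ds A) \<cdot> (\<alpha>' Y (ds A) A \<otimes> idt (ds A)))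
     = (idt Y \<otimes> \<alpha> (ds A) A (ds A)) \<cdot> \<alpha> Y (ds A \<odot> A) (ds A)"
    using arg_cong[OF pentagon[of Y "ds A" A "ds A"], of "\<lambda>k. k \<cdot> (\<alpha>' Y (ds A) A \<otimes> idt (ds A))"] A Y by simp
  have t4: "\<alpha> Y (ds A \<odot> A) (ds A) \<cdot> ((idt Y \<otimes> \<eta> A) \<otimes> idt (ds A)) = (idt Y \<otimes> (\<eta> A \<otimes> idt (ds A))) \<cdot> \<alpha> Y U (ds A)"
    using assoc_nat[of "idt Y" "\<eta> A" "idt (ds A)"] A Y by simp
  have t6: "(idt Y \<otimes> \<rho> (ds A)) \<cdot> ((idt Y \<otimes> (idt (ds A) \<otimes> \<epsilon> A)) \<cdot> ((idt Y \<otimes> \<alpha> (ds A) A (ds A)) \<cdot> ((idt Y \<otimes> (\<eta> A \<otimes> idt (ds A))) \<cdot> (idt Y \<otimes> lu' (ds A))))) = idt (Y \<odot> ds A)"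
    using arg_cong[OF yank2[OF A], of "\<lambda>k. idt Y \<otimes> k"] A Y by simp
  show ?thesis unfolding RT_def RTi_def
    using A Y Z h by (simp add: ctx2[OF s1] ctx2[OF s2] ctx2[OF s3] t1 ctx2[OF t2] ctx3[OF t3] ctx2[OF t4]
      tri_a[OF Y] t6)
qed

lemma pent_RT2: assumes A: "A \<in> Obs" and Z: "Z \<in> Obs"
  shows "(\<alpha> Z A (ds A) \<otimes> idt A) \<cdot> (\<alpha>' (Z \<odot> A) (ds A) A \<cdot> \<alpha>' Z A (ds A \<odot> A))
     = \<alpha>' Z (A \<odot> ds A) A \<cdot> (idt Z \<otimes> \<alpha>' A (ds A) A)"
  using arg_cong[OF pentagon[of Z A "ds A" A],
      of "\<lambda>k. \<alpha>' Z (A \<odot> ds A) A \<cdot> ((idt Z \<otimes> \<alpha>' A (ds A) A) \<cdot> (k \<cdot> (\<alpha>' (Z \<odot> A) (ds A) A \<cdot> \<alpha>' Z A (ds A \<odot> A))))"] A Z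
  by simp

lemma RT2: assumes A: "A \<in> Obs" and Y: "Y \<in> Obs" and Z: "Z \<in> Obs"
  and f: "f \<in> Ars" "dm f = Y" "cd f = Z \<odot> A"
  shows "RTi A Y (RT A Z f) = f"
proof -
  have u1: "((f \<otimes> idt (ds A)) \<otimes> idt A) \<cdot> \<alpha>' Y (ds A) A = \<alpha>' (Z \<odot> A) (ds A) A \<cdot> (f \<otimes> idt (ds A \<odot> A))"
    using assoc'_nat[of f "idt (ds A)" "idt A"] A Y Z f by simp
  have u2: "(f \<otimes> idt (ds A \<odot> A)) \<cdot> (idt Y \<otimes> \<eta> A) = (idt (Z \<odot> A) \<otimes> \<eta> A) \<cdot> (f \<otimes> idt U)"
    using interchange[of "idt Y" f "\<eta> A" "idt (ds A \<odot> A)"] interchange[of f "idt (Z \<odot> A)" "idt U" "\<eta> A"] A Y Z f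
    by simp
  have u3: "(f \<otimes> idt U) \<cdot> \<rho>' Y = \<rho>' (Z \<odot> A) \<cdot> f"
    using runit'_nat[of f] A Y Z f by simp
  have v1: "\<rho>' (Z \<odot> A) = \<alpha>' Z A U \<cdot> (idt Z \<otimes> \<rho>' A)"
    using kelly_r' A Z by simp
  have v2: "(idt (Z \<odot> A) \<otimes> \<eta> A) \<cdot> \<alpha>' Z A U = \<alpha>' Z A (ds A \<odot> A) \<cdot> (idt Z \<otimes> (idt A \<otimes> \<eta> A))"
    using assoc'_nat[of "idt Z" "idt A" "\<eta> A"] A Z by simp
  have v4: "((idt Z \<otimes> \<epsilon> A) \<otimes> idt A) \<cdot> \<alpha>' Z (A \<odot> ds A) A = \<alpha>' Z U A \<cdot> (idt Z \<otimes> (\<epsilon> A \<otimes> idt A))"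
    using assoc'_nat[of "idt Z" "\<epsilon> A" "idt A"] A Z by simp
  have v6: "(idt Z \<otimes> lu A) \<cdot> ((idt Z \<otimes> (\<epsilon> A \<otimes> idt A)) \<cdot> ((idt Z \<otimes> \<alpha>' A (ds A) A) \<cdot> ((idt Z \<otimes> (idt A \<otimes> \<eta> A)) \<cdot> (idt Z \<otimes> \<rho>' A)))) = idt (Z \<odot> A)"
    using arg_cong[OF yank1[OF A], of "\<lambda>k. idt Z \<otimes> k"] A Z by simp
  show ?thesis unfolding RT_def RTi_def
    using A Y Z f by (simp add: ctx2[OF u1] ctx2[OF u2] u3 v1 ctx2[OF v2] ctx3[OF pent_RT2] ctx2[OF v4]
      ctx2[OF tri_b[OF Z A]] ctx5[OF v6])
qed


lemma LT_typ[simp]: "A \<in> Obs \<Longrightarrow> Z \<in> Obs \<Longrightarrow> f \<in> Ars \<Longrightarrow> cd f = ds A \<odot> Z \<Longrightarrow>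
   LT A Z f \<in> Ars \<and> dm (LT A Z f) = A \<odot> dm f \<and> cd (LT A Z f) = Z"
  unfolding LT_def by simp
lemma LTi_typ[simp]: "A \<in> Obs \<Longrightarrow> X \<in> Obs \<Longrightarrow> g \<in> Ars \<Longrightarrow> dm g = A \<odot> X \<Longrightarrow>
   LTi A X g \<in> Ars \<and> dm (LTi A X g) = X \<and> cd (LTi A X g) = ds A \<odot> cd g"
  unfolding LTi_def by simp
lemma RT_typ[simp]: "A \<in> Obs \<Longrightarrow> Z \<in> Obs \<Longrightarrow> f \<in> Ars \<Longrightarrow> cd f = Z \<odot> A \<Longrightarrow>
   RT A Z f \<in> Ars \<and> dm (RT A Z f) = dm f \<odot> ds A \<and> cd (RT A Z f) = Z"
  unfolding RT_def by simp
lemma RTi_typ[simp]: "A \<in> Obs \<Longrightarrow> Y \<in> Obs \<Longrightarrow> h \<in> Ars \<Longrightarrow> dm h = Y \<odot> ds A \<Longrightarrow>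
   RTi A Y h \<in> Ars \<and> dm (RTi A Y h) = Y \<and> cd (RTi A Y h) = cd h \<odot> A"
  unfolding RTi_def by simp

lemma LT_nat: "A \<in> Obs \<Longrightarrow> Z \<in> Obs \<Longrightarrow> f \<in> Ars \<Longrightarrow> cd f = ds A \<odot> Z \<Longrightarrow> k \<in> Ars \<Longrightarrow> cd k = dm f \<Longrightarrow>
  LT A Z (f \<cdot> k) = LT A Z f \<cdot> (idt A \<otimes> k)"
  unfolding LT_def by simp
lemma RT_nat: "A \<in> Obs \<Longrightarrow> Z \<in> Obs \<Longrightarrow> f \<in> Ars \<Longrightarrow> cd f = Z \<odot> A \<Longrightarrow> k \<in> Ars \<Longrightarrow> cd k = dm f \<Longrightarrow>
  RT A Z (f \<cdot> k) = RT A Z f \<cdot> (k \<otimes> idt (ds A))"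
  unfolding RT_def by simp

lemma LTi_nat: assumes A: "A \<in> Obs" and X: "X \<in> Obs" and g: "g \<in> Ars" "dm g = A \<odot> X"
  and k: "k \<in> Ars" "cd k = X"
  shows "LTi A (dm k) (g \<cdot> (idt A \<otimes> k)) = LTi A X g \<cdot> k"
proof -
  have w1: "(idt (ds A) \<otimes> (idt A \<otimes> k)) \<cdot> \<alpha> (ds A) A (dm k) = \<alpha> (ds A) A X \<cdot> (idt (ds A \<odot> A) \<otimes> k)"
    using assoc_nat[of "idt (ds A)" "idt A" k] A X k by simp
  have w2: "(idt (ds A \<odot> A) \<otimes> k) \<cdot> (\<eta> A \<otimes> idt (dm k)) = (\<eta> A \<otimes> idt X) \<cdot> (idt U \<otimes> k)"
    using interchange[of "\<eta> A" "idt (ds A \<odot> A)" "idt (dm k)" k] interchange[of "idt U" "\<eta> A" k "idt X"] A X k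
    by simp
  have w3: "(idt U \<otimes> k) \<cdot> lu' (dm k) = lu' X \<cdot> k"
    using lunit'_nat[of k] k by simp
  show ?thesis unfolding LTi_def using A X g k by (simp add: ctx2[OF w1] ctx2[OF w2] w3)
qed

lemma RTi_nat: assumes A: "A \<in> Obs" and Y: "Y \<in> Obs" and h: "h \<in> Ars" "dm h = Y \<odot> ds A"
  and k: "k \<in> Ars" "cd k = Y"
  shows "RTi A (dm k) (h \<cdot> (k \<otimes> idt (ds A))) = RTi A Y h \<cdot> k"
proof -
  have w1: "((k \<otimes> idt (ds A)) \<otimes> idt A) \<cdot> \<alpha>' (dm k) (ds A) A = \<alpha>' Y (ds A) A \<cdot> (k \<otimes> idt (ds A \<odot> A))"
    using assoc'_nat[of k "idt (ds A)" "idt A"] A Y k by simp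
  have w2: "(k \<otimes> idt (ds A \<odot> A)) \<cdot> (idt (dm k) \<otimes> \<eta> A) = (idt Y \<otimes> \<eta> A) \<cdot> (k \<otimes> idt U)"
    using interchange[of "idt (dm k)" k "\<eta> A" "idt (ds A \<odot> A)"] interchange[of k "idt Y" "idt U" "\<eta> A"] A Y k
    by simp
  have w3: "(k \<otimes> idt U) \<cdot> \<rho>' (dm k) = \<rho>' Y \<cdot> k"
    using runit'_nat[of k] k by simp
  show ?thesis unfolding RTi_def using A Y h k by (simp add: ctx2[OF w1] ctx2[OF w2] w3)
qed

end



locale reflx = cc C for C :: "('o,'a,'x) cc_data_scheme" +
  fixes R app lam
  assumes R[simp]: "R \<in> Ob C" and app[simp]: "app \<in> Ar C" "cdom C app = R" "ccod C app = tens_ob C (dual C R) R"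
  and lam[simp]: "lam \<in> Ar C" "cdom C lam = tens_ob C (dual C R) R" "ccod C lam = R"
  and la[simp]: "cmp C lam app = ident C R" and al[simp]: "cmp C app lam = ident C (tens_ob C (dual C R) R)"
begin

lemma la_ctx[simp]: "r \<in> Ars \<Longrightarrow> cd r = R \<Longrightarrow> lam \<cdot> (app \<cdot> r) = r"
  using ctx2[OF la, of r] by simp
lemma al_ctx[simp]: "r \<in> Ars \<Longrightarrow> cd r = ds R \<odot> R \<Longrightarrow> app \<cdot> (lam \<cdot> r) = r"
  using ctx2[OF al, of r] by simp

definition M where "M X = (lam \<otimes> idt X) \<cdot> (\<alpha>' (ds R) R X \<cdot> \<sigma> (R \<odot> X) (ds R))"
definition Mi where "Mi X = \<sigma> (ds R) (R \<odot> X) \<cdot> (\<alpha> (ds R) R X \<cdot> (app \<otimes> idt X))"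

lemma M_typ[simp]: "X \<in> Obs \<Longrightarrow> M X \<in> Ars \<and> dm (M X) = (R \<odot> X) \<odot> ds R \<and> cd (M X) = R \<odot> X"
  unfolding M_def by simp
lemma Mi_typ[simp]: "X \<in> Obs \<Longrightarrow> Mi X \<in> Ars \<and> dm (Mi X) = R \<odot> X \<and> cd (Mi X) = (R \<odot> X) \<odot> ds R"
  unfolding Mi_def by simp
lemma M_Mi[simp]: "X \<in> Obs \<Longrightarrow> M X \<cdot> Mi X = idt (R \<odot> X)"
  unfolding M_def Mi_def by simp
lemma Mi_M[simp]: "X \<in> Obs \<Longrightarrow> Mi X \<cdot> M X = idt ((R \<odot> X) \<odot> ds R)"
  unfolding M_def Mi_def by simp


lemma M_nat: assumes X: "X \<in> Obs" and k: "k \<in> Ars" "cd k = X"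
  shows "M X \<cdot> ((idt R \<otimes> k) \<otimes> idt (ds R)) = (idt R \<otimes> k) \<cdot> M (dm k)"
proof -
  have m1: "\<sigma> (R \<odot> X) (ds R) \<cdot> ((idt R \<otimes> k) \<otimes> idt (ds R)) = (idt (ds R) \<otimes> (idt R \<otimes> k)) \<cdot> \<sigma> (R \<odot> dm k) (ds R)"
    using sym_nat[of "idt R \<otimes> k" "idt (ds R)"] X k by simp
  have m2: "\<alpha>' (ds R) R X \<cdot> (idt (ds R) \<otimes> (idt R \<otimes> k)) = (idt (ds R \<odot> R) \<otimes> k) \<cdot> \<alpha>' (ds R) R (dm k)"
    using assoc'_nat[of "idt (ds R)" "idt R" k] X k by simp
  have m3: "(lam \<otimes> idt X) \<cdot> (idt (ds R \<odot> R) \<otimes> k) = (idt R \<otimes> k) \<cdot> (lam \<otimes> idt (dm k))"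
    using interchange[of "idt (ds R \<odot> R)" lam k "idt X"] interchange[of lam "idt R" "idt (dm k)" k] X k by simp
  show ?thesis unfolding M_def using X k by (simp add: m1 ctx2[OF m1] ctx2[OF m2] ctx2[OF m3])
qed

lemma Mi_nat: assumes X: "X \<in> Obs" and k: "k \<in> Ars" "cd k = X"
  shows "Mi X \<cdot> (idt R \<otimes> k) = ((idt R \<otimes> k) \<otimes> idt (ds R)) \<cdot> Mi (dm k)"
proof -
  have n1: "(app \<otimes> idt X) \<cdot> (idt R \<otimes> k) = (idt (ds R \<odot> R) \<otimes> k) \<cdot> (app \<otimes> idt (dm k))"
    using interchange[of "idt R" app k "idt X"] interchange[of app "idt (ds R \<odot> R)" "idt (dm k)" k] X k by simp
  have n2: "\<alpha> (ds R) R X \<cdot> (idt (ds R \<odot> R) \<otimes> k) = (idt (ds R) \<otimes> (idt R \<otimes> k)) \<cdot> \<alpha> (ds R) R (dm k)"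
    using assoc_nat[of "idt (ds R)" "idt R" k] X k by simp
  have n3: "\<sigma> (ds R) (R \<odot> X) \<cdot> (idt (ds R) \<otimes> (idt R \<otimes> k)) = ((idt R \<otimes> k) \<otimes> idt (ds R)) \<cdot> \<sigma> (ds R) (R \<odot> dm k)"
    using sym_nat[of "idt (ds R)" "idt R \<otimes> k"] X k by simp
  show ?thesis unfolding Mi_def using X k by (simp add: n1 ctx2[OF n1] ctx2[OF n2] ctx2[OF n3])
qed

definition H where "H X f = LT R U (\<rho>' (ds R) \<cdot> f) \<cdot> M X"
definition G where "G X f = lu R \<cdot> RTi R (R \<odot> X) (H X f)"
definition Phi where "Phi X f = lam \<cdot> LTi R X (G X f)"
definition H' where "H' g = lu' R \<cdot> LT R R (app \<cdot> g)"
definition G' where "G' X g = RT R U (H' g) \<cdot> Mi X"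
definition Psi where "Psi X g = \<rho> (ds R) \<cdot> LTi R X (G' X g)"

lemma H_typ[simp]: "X \<in> Obs \<Longrightarrow> f \<in> Ars \<Longrightarrow> dm f = X \<Longrightarrow> cd f = ds R \<Longrightarrow>
  H X f \<in> Ars \<and> dm (H X f) = (R \<odot> X) \<odot> ds R \<and> cd (H X f) = U"
  unfolding H_def by simp
lemma G_typ[simp]: "X \<in> Obs \<Longrightarrow> f \<in> Ars \<Longrightarrow> dm f = X \<Longrightarrow> cd f = ds R \<Longrightarrow>
  G X f \<in> Ars \<and> dm (G X f) = R \<odot> X \<and> cd (G X f) = R"
  unfolding G_def by simp
lemma Phi_typ[simp]: "X \<in> Obs \<Longrightarrow> f \<in> Ars \<Longrightarrow> dm f = X \<Longrightarrow> cd f = ds R \<Longrightarrow>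
  Phi X f \<in> Ars \<and> dm (Phi X f) = X \<and> cd (Phi X f) = R"
  unfolding Phi_def by simp
lemma H'_typ[simp]: "X \<in> Obs \<Longrightarrow> g \<in> Ars \<Longrightarrow> dm g = X \<Longrightarrow> cd g = R \<Longrightarrow>
  H' g \<in> Ars \<and> dm (H' g) = R \<odot> X \<and> cd (H' g) = U \<odot> R"
  unfolding H'_def by simp
lemma G'_typ[simp]: "X \<in> Obs \<Longrightarrow> g \<in> Ars \<Longrightarrow> dm g = X \<Longrightarrow> cd g = R \<Longrightarrow>
  G' X g \<in> Ars \<and> dm (G' X g) = R \<odot> X \<and> cd (G' X g) = U"
  unfolding G'_def by simp
lemma Psi_typ[simp]: "X \<in> Obs \<Longrightarrow> g \<in> Ars \<Longrightarrow> dm g = X \<Longrightarrow> cd g = R \<Longrightarrow>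
  Psi X g \<in> Ars \<and> dm (Psi X g) = X \<and> cd (Psi X g) = ds R"
  unfolding Psi_def by simp


lemma H_nat: assumes X: "X \<in> Obs" and f: "f \<in> Ars" "dm f = X" "cd f = ds R" and k: "k \<in> Ars" "cd k = X"
  shows "H (dm k) (f \<cdot> k) = H X f \<cdot> ((idt R \<otimes> k) \<otimes> idt (ds R))"
proof -
  have h1: "LT R U (\<rho>' (ds R) \<cdot> (f \<cdot> k)) = LT R U (\<rho>' (ds R) \<cdot> f) \<cdot> (idt R \<otimes> k)"
    using LT_nat[of R U "\<rho>' (ds R) \<cdot> f" k] X f k by simp
  show ?thesis unfolding H_def using X f k by (simp add: h1 M_nat)
qed

lemma G_nat: assumes X: "X \<in> Obs" and f: "f \<in> Ars" "dm f = X" "cd f = ds R" and k: "k \<in> Ars" "cd k = X"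
  shows "G (dm k) (f \<cdot> k) = G X f \<cdot> (idt R \<otimes> k)"
proof -
  have h1: "RTi R (R \<odot> dm k) (H X f \<cdot> ((idt R \<otimes> k) \<otimes> idt (ds R))) = RTi R (R \<odot> X) (H X f) \<cdot> (idt R \<otimes> k)"
    using RTi_nat[of R "R \<odot> X" "H X f" "idt R \<otimes> k"] X f k by simp
  show ?thesis unfolding G_def using X f k by (simp add: H_nat h1)
qed

lemma Phi_nat: assumes X: "X \<in> Obs" and f: "f \<in> Ars" "dm f = X" "cd f = ds R" and k: "k \<in> Ars" "cd k = X"
  shows "Phi (dm k) (f \<cdot> k) = Phi X f \<cdot> k"
proof -
  have h1: "LTi R (dm k) (G X f \<cdot> (idt R \<otimes> k)) = LTi R X (G X f) \<cdot> k"
    using LTi_nat[of R X "G X f" k] X f k by simp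
  show ?thesis unfolding Phi_def using X f k by (simp add: G_nat h1)
qed

lemma H'_nat: assumes X: "X \<in> Obs" and g: "g \<in> Ars" "dm g = X" "cd g = R" and k: "k \<in> Ars" "cd k = X"
  shows "H' (g \<cdot> k) = H' g \<cdot> (idt R \<otimes> k)"
proof -
  have h1: "LT R R (app \<cdot> (g \<cdot> k)) = LT R R (app \<cdot> g) \<cdot> (idt R \<otimes> k)"
    using LT_nat[of R R "app \<cdot> g" k] X g k by simp
  show ?thesis unfolding H'_def using X g k by (simp add: h1)
qed

lemma G'_nat: assumes X: "X \<in> Obs" and g: "g \<in> Ars" "dm g = X" "cd g = R" and k: "k \<in> Ars" "cd k = X"
  shows "G' (dm k) (g \<cdot> k) = G' X g \<cdot> (idt R \<otimes> k)"
proof -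
  have h1: "RT R U (H' g \<cdot> (idt R \<otimes> k)) = RT R U (H' g) \<cdot> ((idt R \<otimes> k) \<otimes> idt (ds R))"
    using RT_nat[of R U "H' g" "idt R \<otimes> k"] X g k by simp
  show ?thesis unfolding G'_def using X g k by (simp add: H'_nat h1 Mi_nat)
qed

lemma Psi_nat: assumes X: "X \<in> Obs" and g: "g \<in> Ars" "dm g = X" "cd g = R" and k: "k \<in> Ars" "cd k = X"
  shows "Psi (dm k) (g \<cdot> k) = Psi X g \<cdot> k"
proof -
  have h1: "LTi R (dm k) (G' X g \<cdot> (idt R \<otimes> k)) = LTi R X (G' X g) \<cdot> k"
    using LTi_nat[of R X "G' X g" k] X g k by simp
  show ?thesis unfolding Psi_def using X g k by (simp add: G'_nat h1)
qed

lemma Psi_Phi: assumes X: "X \<in> Obs" and f: "f \<in> Ars" "dm f = X" "cd f = ds R"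
  shows "Psi X (Phi X f) = f"
  unfolding Psi_def G'_def H'_def Phi_def G_def H_def using X f
  by (simp add: LT1 RT1 LT2)

lemma Phi_Psi: assumes X: "X \<in> Obs" and g: "g \<in> Ars" "dm g = X" "cd g = R"
  shows "Phi X (Psi X g) = g"
  unfolding Psi_def G'_def H'_def Phi_def G_def H_def using X g
  by (simp add: LT1 RT2 LT2)

lemma self_dual_R: "isomorphic C R (ds R)"
proof -
  define f0 where "f0 = Phi (ds R) (idt (ds R))"
  define g0 where "g0 = Psi R (idt R)"
  have tf: "f0 \<in> Ars" "dm f0 = ds R" "cd f0 = R" unfolding f0_def by simp_all
  have tg: "g0 \<in> Ars" "dm g0 = R" "cd g0 = ds R" unfolding g0_def by simp_all
  have "f0 \<cdot> g0 = Phi R (idt (ds R) \<cdot> g0)"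
    unfolding f0_def using Phi_nat[of "ds R" "idt (ds R)" g0] tg by simp
  also have "\<dots> = idt R" using tg by (simp add: g0_def Phi_Psi)
  finally have 1: "f0 \<cdot> g0 = idt R" .
  have "g0 \<cdot> f0 = Psi (ds R) (idt R \<cdot> f0)"
    unfolding g0_def using Psi_nat[of R "idt R" f0] tf by simp
  also have "\<dots> = idt (ds R)" using tf by (simp add: f0_def Psi_Phi)
  finally have 2: "g0 \<cdot> f0 = idt (ds R)" .
  show ?thesis unfolding isomorphic_def hom_def using 1 2 tf tg by blast
qed

end



theorem mainTheorem1:
  fixes C :: "('o, 'a, 'x) cc_data_scheme" and R :: 'o
  assumes "compact_closed C" and "R \<in> Ob C"
  shows "reflexive_obj C R \<longleftrightarrow> self_dual C R \<and> self_similar C R"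
proof -
  interpret cc C using assms(1) by unfold_locales
  have R: "R \<in> Obs" by fact
  show ?thesis
  proof
    assume "reflexive_obj C R"
    then obtain app lam where a: "app \<in> Ars" "dm app = R" "cd app = ds R \<odot> R"
      and l: "lam \<in> Ars" "dm lam = ds R \<odot> R" "cd lam = R"
      and la: "lam \<cdot> app = idt R" and al: "app \<cdot> lam = idt (ds R \<odot> R)"
      unfolding reflexive_obj_def internal_hom_def hom_def by blast
    interpret reflx C R app lam
      using a l la al R by unfold_locales auto
    have sd: "self_dual C R" unfolding self_dual_def by (rule self_dual_R)
    then obtain s s' where s: "s \<in> Ars" "dm s = R" "cd s = ds R"
      and s': "s' \<in> Ars" "dm s' = ds R" "cd s' = R"
      and ss: "s' \<cdot> s = idt R" "s \<cdot> s' = idt (ds R)"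
      unfolding self_dual_def isomorphic_def hom_def by blast
    have "self_similar C R" unfolding self_similar_def isomorphic_def hom_def
      apply (rule exI[of _ "(s' \<otimes> idt R) \<cdot> app"], rule exI[of _ "lam \<cdot> (s \<otimes> idt R)"])
      using s s' ss by simp
    with sd show "self_dual C R \<and> self_similar C R" by blast
  next
    assume "self_dual C R \<and> self_similar C R"
    then obtain s s' d c where s: "s \<in> Ars" "dm s = R" "cd s = ds R"
      and s': "s' \<in> Ars" "dm s' = ds R" "cd s' = R"
      and ss: "s' \<cdot> s = idt R" "s \<cdot> s' = idt (ds R)"
      and d: "d \<in> Ars" "dm d = R" "cd d = R \<odot> R"
      and c: "c \<in> Ars" "dm c = R \<odot> R" "cd c = R"
      and dc: "c \<cdot> d = idt R" "d \<cdot> c = idt (R \<odot> R)"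
      unfolding self_dual_def self_similar_def isomorphic_def hom_def by blast
    have dc': "c \<cdot> (d \<cdot> r) = r" if "r \<in> Ars" "cd r = R" for r
      using ctx2[OF dc(1), of r] that c d by simp
    have cd': "d \<cdot> (c \<cdot> r) = r" if "r \<in> Ars" "cd r = R \<odot> R" for r
      using ctx2[OF dc(2), of r] that c d by simp
    show "reflexive_obj C R" unfolding reflexive_obj_def internal_hom_def hom_def
      apply (rule exI[of _ "(s \<otimes> idt R) \<cdot> d"], rule exI[of _ "c \<cdot> (s' \<otimes> idt R)"])
      using s s' ss c d R by (simp add: dc' cd' dc)
  qed
qed


end
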